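(* Let $\nu_n(x_0,x_1)$ ($n\ge 0$) be any nonvanishing functions and $\bar P_n(x;x_0,x_1)=\nu_n(x_0,x_1)P_n(x;x_0,x_1)$. Then for all $n\ge1$: $$\mathcal{A}_2\bar P_n=\frac{\mathrm{i}\,q^{-\frac14}}{1-x_0^2}\Bigg\{x_0^2\frac{\nu_n(q^{-\frac12}x_0,x_1)}{\nu_{n+1}(x_0,x_1)}\bar P_{n+1}-\frac{\nu_n(q^{\frac12}x_0,x_1)}{\nu_{n-1}(x_0,x_1)}\lambda_n(x_0,x_1)\bar P_{n-1}+\left(x_0^2\frac{\gamma_n(q^{-\frac12}x_0,x_1)}{\lambda_n(q^{-\frac12}x_0,x_1)}\frac{\nu_n(q^{-\frac12}x_0,x_1)}{\nu_n(x_0,x_1)}-\frac{\nu_n(q^{\frac12}x_0,x_1)}{\nu_n(x_0,x_1)}\right)\bar P_n\Bigg\},$$ $$\mathcal{A}_4\bar P_n=\frac{\mathrm{i}\,q^{-\frac14}}{1-x_1^2}\Bigg\{x_1^2\frac{\nu_n(x_0,q^{-\frac12}x_1)}{\nu_{n+1}(x_0,x_1)}\bar P_{n+1}-\frac{\nu_n(x_0,q^{\frac12}x_1)}{\nu_{n-1}(x_0,x_1)}\lambda_n(x_1,x_0)\bar P_{n-1}+\left(x_1^2\frac{\gamma_n(x_0,q^{-\frac12}x_1)}{\lambda_n(q^{-\frac12}x_1,x_0)}\frac{\nu_n(x_0,q^{-\frac12}x_1)}{\nu_n(x_0,x_1)}-\frac{\nu_n(x_0,q^{\frac12}x_1)}{\nu_n(x_0,x_1)}\right)\bar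 P_n\Bigg\},$$ where on the right-hand sides $\bar P_m=\bar P_m(x;x_0,x_1)$.
   Context: Let $q$ be a complex parameter with $0<|q|<1$, with a fixed choice of $q^{1/4}$ and $q^{k/4}:=(q^{1/4})^k$; $x,x_0,x_1$ are variables; $\mathrm{i}=\sqrt{-1}$. Notation: $(y)_n=(y;q)_n=\prod_{i=1}^{n}(1-yq^{i-1})$, $(y_1,\dots,y_k)_n=(y_1)_n\cdots(y_k)_n$. Operators on functions $f(x,x_0,x_1)$: $\eth_0 f(x,x_0,x_1)=f(x,q^{1/2}x_0,x_1)$, $\eth_1 f(x,x_0,x_1)=f(x,x_0,q^{1/2}x_1)$, with inverses defined accordingly; a function written to the left of an operator acts by multiplication after the operator is applied. For $n\ge0$, $$P_n(x;x_0,x_1)=(-1)^nq^{-\frac n2}\frac{\left(q,\frac{q}{x_0^2},\frac{q}{x_1^2}\right)_n}{\left(\frac{q^{n+1}}{x_0^2x_1^2}\right)_n}\sum_{k=0}^{n}q^k\frac{\left(q^{-n},\frac{q^{n+1}}{x_0^2x_1^2}\right)_k}{\left(q,q,\frac{q}{x_0^2},\frac{q}{x_1^2}\right)_k}\left(-q^{\frac12}x,-q^{\frac12}x^{-1}\right)_k$$ (the Askey–Wilson polynomial with parameters $(a,b,c,d)=(-q^{1/2},-q^{1/2},-q^{1/2}/x_0^2,-q^{1/2}/x_1^2)$). For $b\in\{0,1\}$ let $$G_0(x_b;x)=-\frac{1}{1-x_b^2}\eth_b+\frac{(q^{\frac12}x+x_b^2)(q^{\frac12}+x\,x_b^2)}{q^{\frac12}x(1-x_b^2)}\eth_b^{-1},$$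 and $\mathcal{A}_2=\mathrm{i}\,q^{-1/4}G_0(x_0;x)$, $\mathcal{A}_4=\mathrm{i}\,q^{-1/4}G_0(x_1;x)$ (images of the curves $\mathbb{k}_2,\mathbb{k}_4$ of the genus-two skein algebra). Further, $$\gamma_n(x_0,x_1)=\frac{(1-q^n)^2\left(1-\frac{q^n}{x_0^2x_1^2}\right)^2\left(1-\frac{q^n}{x_0^2}\right)^2\left(1-\frac{q^n}{x_1^2}\right)^2}{\left(1-\frac{q^{2n-1}}{x_0^2x_1^2}\right)\left(1-\frac{q^{2n}}{x_0^2x_1^2}\right)^2\left(1-\frac{q^{2n+1}}{x_0^2x_1^2}\right)},\qquad \lambda_n(x_0,x_1)=\frac{q^{-\frac12}(1-q^n)^2\left(1-\frac{q^n}{x_1^2}\right)^2}{x_0^2\left(1-\frac{q^{2n-1}}{x_0^2x_1^2}\right)\left(1-\frac{q^{2n}}{x_0^2x_1^2}\right)}.$$ *)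

theory Defs
  imports Complex_Main
begin

text \<open>Parameters: q with 0 < |q| < 1 and a fixed fourth root r = q^(1/4);
  q^(k/4) := r^k, in particular q^(1/2) = r^2.\<close>

definition qpoch :: "complex \<Rightarrow> complex \<Rightarrow> nat \<Rightarrow> complex" where
  "qpoch q y n = (\<Prod>i<n. (1 - y * q ^ i))"

definition AWP :: "complex \<Rightarrow> complex \<Rightarrow> nat \<Rightarrow> complex \<Rightarrow> complex \<Rightarrow> complex \<Rightarrow> complex" where
  "AWP q r n x x0 x1 =
     (-1) ^ n * (1 / r ^ 2) ^ n *
     (qpoch q q n * qpoch q (q / x0 ^ 2) n * qpoch q (q / x1 ^ 2) n)
       / qpoch q (q ^ (n + 1) / (x0 ^ 2 * x1 ^ 2)) n *
     (\<Sum>k\<le>n. q ^ k *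
        (qpoch q (inverse (q ^ n)) k * qpoch q (q ^ (n + 1) / (x0 ^ 2 * x1 ^ 2)) k)
        / (qpoch q q k * qpoch q q k * qpoch q (q / x0 ^ 2) k * qpoch q (q / x1 ^ 2) k)
        * (qpoch q (- (r ^ 2) * x) k * qpoch q (- (r ^ 2) / x) k))"

definition eth0 :: "complex \<Rightarrow> (complex \<Rightarrow> complex \<Rightarrow> complex \<Rightarrow> complex) \<Rightarrow> complex \<Rightarrow> complex \<Rightarrow> complex \<Rightarrow> complex" where
  "eth0 s f x x0 x1 = f x (s * x0) x1"

definition eth1 :: "complex \<Rightarrow> (complex \<Rightarrow> complex \<Rightarrow> complex \<Rightarrow> complex) \<Rightarrow> complex \<Rightarrow> complex \<Rightarrow> complex \<Rightarrow> complex" where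
  "eth1 s f x x0 x1 = f x x0 (s * x1)"

text \<open>G_0(x_0; x): here \<open>eth0 (r^2)\<close> is \<open>\<eth>\<^sub>0\<close> and \<open>eth0 (1/r^2)\<close> its inverse.\<close>
definition G0_x0 :: "complex \<Rightarrow> (complex \<Rightarrow> complex \<Rightarrow> complex \<Rightarrow> complex) \<Rightarrow> complex \<Rightarrow> complex \<Rightarrow> complex \<Rightarrow> complex" where
  "G0_x0 r f x x0 x1 =
     - 1 / (1 - x0 ^ 2) * eth0 (r ^ 2) f x x0 x1
     + ((r ^ 2 * x + x0 ^ 2) * (r ^ 2 + x * x0 ^ 2)) / (r ^ 2 * x * (1 - x0 ^ 2))
       * eth0 (1 / r ^ 2) f x x0 x1"

definition G0_x1 :: "complex \<Rightarrow> (complex \<Rightarrow> complex \<Rightarrow> complex \<Rightarrow> complex) \<Rightarrow> complex \<Rightarrow> complex \<Rightarrow> complex \<Rightarrow> complex" where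
  "G0_x1 r f x x0 x1 =
     - 1 / (1 - x1 ^ 2) * eth1 (r ^ 2) f x x0 x1
     + ((r ^ 2 * x + x1 ^ 2) * (r ^ 2 + x * x1 ^ 2)) / (r ^ 2 * x * (1 - x1 ^ 2))
       * eth1 (1 / r ^ 2) f x x0 x1"

definition A2 :: "complex \<Rightarrow> (complex \<Rightarrow> complex \<Rightarrow> complex \<Rightarrow> complex) \<Rightarrow> complex \<Rightarrow> complex \<Rightarrow> complex \<Rightarrow> complex" where
  "A2 r f x x0 x1 = \<i> * (1 / r) * G0_x0 r f x x0 x1"

definition A4 :: "complex \<Rightarrow> (complex \<Rightarrow> complex \<Rightarrow> complex \<Rightarrow> complex) \<Rightarrow> complex \<Rightarrow> complex \<Rightarrow> complex \<Rightarrow> complex" where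
  "A4 r f x x0 x1 = \<i> * (1 / r) * G0_x1 r f x x0 x1"

definition gammaAW :: "complex \<Rightarrow> nat \<Rightarrow> complex \<Rightarrow> complex \<Rightarrow> complex" where
  "gammaAW q n x0 x1 =
     ((1 - q ^ n) ^ 2 * (1 - q ^ n / (x0 ^ 2 * x1 ^ 2)) ^ 2 * (1 - q ^ n / x0 ^ 2) ^ 2
        * (1 - q ^ n / x1 ^ 2) ^ 2)
     / ((1 - q ^ (2 * n - 1) / (x0 ^ 2 * x1 ^ 2)) * (1 - q ^ (2 * n) / (x0 ^ 2 * x1 ^ 2)) ^ 2
        * (1 - q ^ (2 * n + 1) / (x0 ^ 2 * x1 ^ 2)))"

text \<open>lambda_n; the factor q^(-1/2) is 1/r^2.\<close>
definition lambdaAW :: "complex \<Rightarrow> complex \<Rightarrow> nat \<Rightarrow> complex \<Rightarrow> complex \<Rightarrow> complex" where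
  "lambdaAW q r n x0 x1 =
     (1 / r ^ 2) * (1 - q ^ n) ^ 2 * (1 - q ^ n / x1 ^ 2) ^ 2
     / (x0 ^ 2 * (1 - q ^ (2 * n - 1) / (x0 ^ 2 * x1 ^ 2)) * (1 - q ^ (2 * n) / (x0 ^ 2 * x1 ^ 2)))"

definition Pbar :: "complex \<Rightarrow> complex \<Rightarrow> (nat \<Rightarrow> complex \<Rightarrow> complex \<Rightarrow> complex) \<Rightarrow> nat
    \<Rightarrow> complex \<Rightarrow> complex \<Rightarrow> complex \<Rightarrow> complex" where
  "Pbar q r \<nu> n x x0 x1 = \<nu> n x0 x1 * AWP q r n x x0 x1"

end

theory Submission
  imports Defs
begin


definition cf :: "complex \<Rightarrow> complex \<Rightarrow> nat \<Rightarrow> nat \<Rightarrow> complex \<Rightarrow> complex \<Rightarrow> complex" where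
  "cf q s n k a b = (-1) ^ n * (1 / s) ^ n *
     (qpoch q q n * qpoch q (q / a) n * qpoch q (q / b) n)
       / qpoch q (q ^ (n + 1) / (a * b)) n *
     (q ^ k *
        (qpoch q (inverse (q ^ n)) k * qpoch q (q ^ (n + 1) / (a * b)) k)
        / (qpoch q q k * qpoch q q k * qpoch q (q / a) k * qpoch q (q / b) k))"

definition ph :: "complex \<Rightarrow> complex \<Rightarrow> complex \<Rightarrow> nat \<Rightarrow> complex" where
  "ph q s x k = qpoch q (- s * x) k * qpoch q (- s / x) k"

lemma AWP_cf: "AWP q r n x x0 x1 = (\<Sum>k\<le>n. cf q (r^2) n k (x0^2) (x1^2) * ph q (r^2) x k)"
  unfolding AWP_def cf_def ph_def by (simp add: sum_distrib_left mult.assoc)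

lemma qpoch_0[simp]: "qpoch q y 0 = 1" by (simp add: qpoch_def)

lemma qpoch_Suc: "qpoch q y (Suc m) = qpoch q y m * (1 - y * q ^ m)"
  by (simp add: qpoch_def)

lemma qpoch_shift: "(1 - y) * qpoch q (q * y) m = qpoch q y m * (1 - y * q ^ m)"
proof (induction m)
  case 0 then show ?case by simp
next
  case (Suc m)
  have "(1 - y) * qpoch q (q * y) (Suc m) = ((1 - y) * qpoch q (q * y) m) * (1 - q * y * q ^ m)"
    by (simp add: qpoch_Suc)
  also have "\<dots> = qpoch q y m * (1 - y * q ^ m) * (1 - q * y * q ^ m)"
    using Suc.IH by simp
  also have "\<dots> = qpoch q y (Suc m) * (1 - y * q ^ Suc m)"
    by (simp add: qpoch_Suc ac_simps)
  finally show ?case .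
qed

lemma qpoch_nz: "(\<And>i. i < m \<Longrightarrow> y * q ^ i \<noteq> 1) \<Longrightarrow> qpoch q y m \<noteq> 0"
  by (simp add: qpoch_def)

definition pre :: "complex \<Rightarrow> complex \<Rightarrow> nat \<Rightarrow> complex \<Rightarrow> complex \<Rightarrow> complex" where
  "pre q s n a b = (-1) ^ n * (1 / s) ^ n *
     (qpoch q q n * qpoch q (q / a) n * qpoch q (q / b) n) / qpoch q (q ^ (n + 1) / (a * b)) n"

definition kp :: "complex \<Rightarrow> nat \<Rightarrow> nat \<Rightarrow> complex \<Rightarrow> complex \<Rightarrow> complex" where
  "kp q n k a b = q ^ k *
        (qpoch q (inverse (q ^ n)) k * qpoch q (q ^ (n + 1) / (a * b)) k)
        / (qpoch q q k * qpoch q q k * qpoch q (q / a) k * qpoch q (q / b) k)"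

lemma cf_pre_kp: "cf q s n k a b = pre q s n a b * kp q n k a b"
  unfolding cf_def pre_def kp_def by simp

lemma omd: "(Y::complex) \<noteq> 0 \<Longrightarrow> 1 - X/Y = (Y - X)/Y" by (simp add: field_simps)

definition gen :: "complex \<Rightarrow> complex \<Rightarrow> bool" where
  "gen q c \<longleftrightarrow> c \<noteq> 0 \<and> (\<forall>m::int. c \<noteq> q powi m)"

lemma gen_pow: "gen q c \<Longrightarrow> c \<noteq> q ^ i"
  unfolding gen_def by (metis power_int_of_nat)

lemma gen_nz: "gen q c \<Longrightarrow> 1 - q ^ i / c \<noteq> 0"
  using gen_pow[of q c i] unfolding gen_def by auto

lemma gen_nz2: "gen q c \<Longrightarrow> 1 - q ^ i * q ^ j / c \<noteq> 0"
  using gen_nz[of q c "i+j"] by (simp add: power_add)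

lemma gen_nz3: "gen q c \<Longrightarrow> 1 - q * (q ^ i) / c \<noteq> 0"
  using gen_nz[of q c "Suc i"] by simp

lemma gen_qp: "gen q c \<Longrightarrow> qpoch q (q ^ j / c) m \<noteq> 0"
  apply (rule qpoch_nz)
  using gen_pow[of q c "j + i" for i] unfolding gen_def by (auto simp: power_add field_simps)

lemma gen_qp1: "gen q c \<Longrightarrow> qpoch q (q / c) m \<noteq> 0"
  using gen_qp[of q c 1 m] by simp

lemma pre_a:
  assumes q0: "q \<noteq> 0" and s0: "s \<noteq> 0" and ga: "gen q a" and gb: "gen q b" and gab: "gen q (a*b)"
  shows "pre q s n (q*a) b = pre q s n a b *
     (((1 - 1/a) * (1 - q^n*q^n/(a*b))) / ((1 - q^n/a) * (1 - q^n/(a*b))))"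
proof -
  have a0: "a \<noteq> 0" "b \<noteq> 0" using ga gb unfolding gen_def by auto
  have h1: "qpoch q (q/(q*a)) n = (1 - 1/a) * qpoch q (q/a) n / (1 - q^n/a)"
    using qpoch_shift[of "1/a" q n] gen_nz[OF ga, of n] q0 by (simp add: field_simps)
  have h2: "qpoch q (q^(n+1)/(q*a*b)) n = (1 - q^n/(a*b)) * qpoch q (q^(n+1)/(a*b)) n / (1 - q^n*q^n/(a*b))"
    using qpoch_shift[of "q^n/(a*b)" q n] gen_nz2[OF gab, of n n] q0 by (simp add: field_simps)
  have nz: "qpoch q (q^(n+1)/(a*b)) n \<noteq> 0" "1 - q^n/(a*b) \<noteq> 0" "1 - q^n/a \<noteq> 0"
    using gen_qp[OF gab, of "n+1" n] gen_nz[OF gab] gen_nz[OF ga] by auto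
  show ?thesis unfolding pre_def h1 h2 using nz gen_nz2[OF gab, of n n] a0 s0 by (simp add: field_simps)
qed

lemma kp_a:
  assumes q0: "q \<noteq> 0" and qn: "\<And>i. q ^ Suc i \<noteq> 1"
    and ga: "gen q a" and gb: "gen q b" and gab: "gen q (a*b)"
  shows "kp q n k (q*a) b = kp q n k a b *
     (((1 - q^n/(a*b)) * (1 - q^k/a)) / ((1 - q^n*q^k/(a*b)) * (1 - 1/a)))"
proof -
  have a0: "a \<noteq> 0" "b \<noteq> 0" using ga gb unfolding gen_def by auto
  have h1: "qpoch q (q/(q*a)) k = (1 - 1/a) * qpoch q (q/a) k / (1 - q^k/a)"
    using qpoch_shift[of "1/a" q k] gen_nz[OF ga, of k] q0 by (simp add: field_simps)
  have h2: "qpoch q (q^(n+1)/(q*a*b)) k = (1 - q^n/(a*b)) * qpoch q (q^(n+1)/(a*b)) k / (1 - q^n*q^k/(a*b))"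
    using qpoch_shift[of "q^n/(a*b)" q k] gen_nz2[OF gab, of n k] q0 by (simp add: field_simps)
  have nz: "qpoch q (q/a) k \<noteq> 0" "qpoch q (q/b) k \<noteq> 0" "1 - q^k/a \<noteq> 0" "a \<noteq> 1"
      "qpoch q q k \<noteq> 0"
    using gen_qp1[OF ga] gen_qp1[OF gb] gen_nz[OF ga, of k] gen_nz[OF ga, of 0] qn
    by (auto intro!: qpoch_nz simp: mult.commute[of q])
  show ?thesis unfolding kp_def h1 h2 using nz gen_nz2[OF gab, of n k] q0 a0
    by (simp add: field_simps)
qed

lemma kp_step:
  assumes q0: "q \<noteq> 0" and qn: "\<And>i. q ^ Suc i \<noteq> 1"
    and ga: "gen q a" and gb: "gen q b"
  shows "kp q n (Suc k) a b = kp q n k a b *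
     (q * ((1 - inverse (q^n) * q^k) * (1 - q^(n+1)/(a*b) * q^k)) /
      ((1 - q*q^k) * (1 - q*q^k) * (1 - q/a*q^k) * (1 - q/b*q^k)))"
proof -
  have nz: "qpoch q (q/a) k \<noteq> 0" "qpoch q (q/b) k \<noteq> 0" "qpoch q q k \<noteq> 0"
    using gen_qp1[OF ga] gen_qp1[OF gb] qn by (auto intro!: qpoch_nz simp: mult.commute[of q])
  show ?thesis unfolding kp_def qpoch_Suc using nz by (simp add: field_simps)
qed

lemma kp_n:
  assumes q0: "q \<noteq> 0"
  shows "kp q (Suc n) k a b * ((1 - inverse (q^(Suc n)) * q^k) * (1 - q^(n+1)/(a*b))) =
         kp q n k a b * ((1 - inverse (q^(Suc n))) * (1 - q^(n+1)/(a*b) * q^k))"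
proof -
  have r1: "(1 - inverse (q^(Suc n))) * qpoch q (inverse (q^n)) k
          = qpoch q (inverse (q^(Suc n))) k * (1 - inverse (q^(Suc n)) * q^k)"
    using qpoch_shift[of "inverse (q^(Suc n))" q k] q0 by (simp add: field_simps)
  have r2: "(1 - q^(n+1)/(a*b)) * qpoch q (q^(Suc n+1)/(a*b)) k
          = qpoch q (q^(n+1)/(a*b)) k * (1 - q^(n+1)/(a*b) * q^k)"
    using qpoch_shift[of "q^(n+1)/(a*b)" q k] by (simp add: field_simps)
  have aux: "\<And>c P D Q P' Q'. P * Q = P' * Q' \<Longrightarrow> (c::complex) * P / D * Q = c * P' / D * Q'"
    by (metis mult.assoc times_divide_eq_left times_divide_eq_right)
  show ?thesis unfolding kp_def
  proof (rule aux)
    let ?A' = "qpoch q (inverse (q^(Suc n))) k" and ?B' = "qpoch q (q^(Suc n+1)/(a*b)) k"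
    let ?A = "qpoch q (inverse (q^n)) k" and ?B = "qpoch q (q^(n+1)/(a*b)) k"
    have "(?A' * ?B') * ((1 - inverse (q^(Suc n)) * q^k) * (1 - q^(n+1)/(a*b)))
        = (?A' * (1 - inverse (q^(Suc n)) * q^k)) * ((1 - q^(n+1)/(a*b)) * ?B')" by (simp only: ac_simps)
    also have "\<dots> = ((1 - inverse (q^(Suc n))) * ?A) * (?B * (1 - q^(n+1)/(a*b) * q^k))"
      by (simp only: r1 r2)
    also have "\<dots> = (?A * ?B) * ((1 - inverse (q^(Suc n))) * (1 - q^(n+1)/(a*b) * q^k))"
      by (simp only: ac_simps)
    finally show "(?A' * ?B') * ((1 - inverse (q^(Suc n)) * q^k) * (1 - q^(n+1)/(a*b)))
        = (?A * ?B) * ((1 - inverse (q^(Suc n))) * (1 - q^(n+1)/(a*b) * q^k))" .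
  qed
qed

lemma pre_n:
  assumes q0: "q \<noteq> 0" and s0: "s \<noteq> 0" and qn: "\<And>i. q ^ Suc i \<noteq> 1"
    and ga: "gen q a" and gb: "gen q b" and gab: "gen q (a*b)"
  shows "pre q s (Suc n) a b * ((1 - q^(n+1)/(a*b)*q^n) * (1 - q*(q^(n+1)/(a*b))*q^n)) =
         pre q s n a b * (- (1/s) * (1 - q*q^n) * (1 - q/a*q^n) * (1 - q/b*q^n) * (1 - q^(n+1)/(a*b)))"
proof -
  have r2: "(1 - q^(n+1)/(a*b)) * qpoch q (q*(q^(n+1)/(a*b))) n
          = qpoch q (q^(n+1)/(a*b)) n * (1 - q^(n+1)/(a*b) * q^n)"
    using qpoch_shift[of "q^(n+1)/(a*b)" q n] by simp
  have e: "q^(Suc n + 1)/(a*b) = q*(q^(n+1)/(a*b))" by simp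
  have nz: "qpoch q (q^(n+1)/(a*b)) n \<noteq> 0" "qpoch q (q*(q^(n+1)/(a*b))) n \<noteq> 0"
     "1 - q * (q ^ (n + 1) / (a * b)) * q ^ n \<noteq> 0"
    using gen_qp[OF gab, of "n+1" n] gen_qp[OF gab, of "n+2" n] gen_nz[OF gab, of "n+2+n"]
    by (auto simp: power_add field_simps)
  have a0: "a \<noteq> 0" "b \<noteq> 0" using ga gb unfolding gen_def by auto
  let ?E = "qpoch q (q*(q^(n+1)/(a*b))) n" and ?y = "q^(n+1)/(a*b)"
  have E: "?E = qpoch q ?y n * (1 - ?y * q^n) / (1 - ?y)"
    using r2 gen_nz[OF gab, of "n+1"] by (simp add: field_simps)
  define c where "c = (-1::complex)^n * (1/s)^n"
  define P where "P = qpoch q q n * qpoch q (q/a) n * qpoch q (q/b) n"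
  define Y where "Y = qpoch q ?y n"
  have Y0: "Y \<noteq> 0" using nz(1) unfolding Y_def by simp
  have p1: "pre q s (Suc n) a b = c * (- (1/s)) * (P * ((1 - q*q^n) * (1 - q/a*q^n) * (1 - q/b*q^n)))
      / (Y * (1 - ?y * q^n) / (1 - ?y) * (1 - q*?y*q^n))"
    unfolding pre_def e qpoch_Suc E c_def P_def Y_def by (simp add: ac_simps)
  have p2: "pre q s n a b = c * P / Y" unfolding pre_def c_def P_def Y_def by simp
  have nz2: "1 - ?y \<noteq> 0" "1 - ?y * q^n \<noteq> 0" "1 - q*?y*q^n \<noteq> 0"
    using gen_nz[OF gab, of "n+1"] gen_nz[OF gab, of "n+1+n"] gen_nz[OF gab, of "n+2+n"] a0
    by (auto simp: power_add field_simps)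
  have abs1: "\<And>Y u v w s c P f1 f2 f3. Y\<noteq>0 \<Longrightarrow> u\<noteq>0 \<Longrightarrow> v\<noteq>0 \<Longrightarrow> w\<noteq>0 \<Longrightarrow> s\<noteq>0 \<Longrightarrow>
     (c::complex) * (-(1/s)) * (P*(f1*f2*f3)) / (Y*u/v*w) * (u*w) = c*P/Y * (-(1/s)*f1*f2*f3*v)"
    by (simp add: field_simps)
  show ?thesis unfolding p1 p2 by (rule abs1[OF Y0 nz2(2) nz2(1) nz2(3) s0])
qed



lemma c1: fixes a b T :: complex assumes "a \<noteq> 0" "b \<noteq> 0" "a - T \<noteq> 0" "a*b - T \<noteq> 0"
  shows "((1 - 1/a) * (1 - T*T/(a*b))) / ((1 - T/a) * (1 - T/(a*b))) * ((a - T) * (a*b - T)) = (a - 1) * (a*b - T*T)"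
proof -
  have e: "1 - 1/a = (a - 1)/a" "1 - T*T/(a*b) = (a*b - T*T)/(a*b)" "1 - T/a = (a - T)/a" "1 - T/(a*b) = (a*b - T)/(a*b)"
    using assms by (auto simp: field_simps)
  show ?thesis unfolding e using assms by (simp add: divide_simps)
qed
lemma c2: fixes a b T K :: complex assumes "a \<noteq> 0" "b \<noteq> 0" "a*b - T*K \<noteq> 0" "a - 1 \<noteq> 0"
  shows "((1 - T/(a*b)) * (1 - K/a)) / ((1 - T*K/(a*b)) * (1 - 1/a)) * ((a*b - T*K) * (a - 1)) = (a*b - T) * (a - K)"
proof -
  have e: "1 - 1/a = (a - 1)/a" "1 - K/a = (a - K)/a" "1 - T*K/(a*b) = (a*b - T*K)/(a*b)" "1 - T/(a*b) = (a*b - T)/(a*b)"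
    using assms by (auto simp: field_simps)
  show ?thesis unfolding e using assms by (simp add: divide_simps)
qed
lemma c3: fixes q a b T K P1 :: complex assumes "P1 = q*T" "a \<noteq> 0" "b \<noteq> 0" "T \<noteq> 0" "1 - q*K \<noteq> 0" "a - q*K \<noteq> 0" "b - q*K \<noteq> 0"
  shows "(q * ((1 - inverse T * K) * (1 - P1/(a*b) * K)) / ((1 - q*K) * (1 - q*K) * (1 - q/a*K) * (1 - q/b*K)))
    * (T * (1 - q*K)^2 * (a - q*K) * (b - q*K)) = q * (T - K) * (a*b - q*T*K)"
proof -
  have e: "(1 - q/a*K) = (a - q*K)/a" "(1 - q/b*K) = (b - q*K)/b" "1 - inverse T * K = (T - K)/T"
     "1 - P1/(a*b)*K = (a*b - q*T*K)/(a*b)" using assms by (auto simp: field_simps)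
  show ?thesis unfolding e using assms by (simp add: divide_simps power2_eq_square)
qed
lemma c4a: fixes q a b T P1 :: complex assumes "P1 = q*T" "a \<noteq> 0" "b \<noteq> 0"
  shows "((1 - P1/(a*b)*T) * (1 - q*(P1/(a*b))*T)) * (a*b)^2 = (a*b - q*T*T) * (a*b - q*q*T*T)"
  using assms by (simp add: field_simps power2_eq_square)
lemma c4b: fixes q s a b T P1 :: complex assumes "P1 = q*T" "a \<noteq> 0" "b \<noteq> 0" "s \<noteq> 0"
  shows "(- (1/s) * (1 - q*T) * (1 - q/a*T) * (1 - q/b*T) * (1 - P1/(a*b))) * (s * (a*b)^2)
     = - ((1 - q*T) * (a - q*T) * (b - q*T) * (a*b - q*T))"
  using assms by (simp add: field_simps power2_eq_square)
lemma c5a: fixes q a b T K P1 PS :: complex assumes "P1 = q*T" "PS = q*T" "a \<noteq> 0" "b \<noteq> 0" "q*T \<noteq> 0"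
  shows "((1 - inverse PS * K) * (1 - P1/(a*b))) * (q*T*(a*b)) = (q*T - K) * (a*b - q*T)"
  using assms by (simp add: field_simps)
lemma c5b: fixes q a b T K P1 PS :: complex assumes "P1 = q*T" "PS = q*T" "a \<noteq> 0" "b \<noteq> 0" "q*T \<noteq> 0"
  shows "((1 - inverse PS) * (1 - P1/(a*b) * K)) * (q*T*(a*b)) = (q*T - 1) * (a*b - q*T*K)"
  using assms by (simp add: field_simps)

lemma cfA:
  assumes q0: "q \<noteq> 0" and s0: "s \<noteq> 0" and qn: "\<And>i. q ^ Suc i \<noteq> 1"
    and ga: "gen q a" and gb: "gen q b" and gab: "gen q (a*b)"
  shows "cf q s n k (q*a) b * ((a - q^n) * (a*b - q^n*q^k)) = cf q s n k a b * ((a*b - q^n*q^n) * (a - q^k))"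
proof -
  have a0: "a \<noteq> 0" "b \<noteq> 0" using ga gb unfolding gen_def by auto
  have nz: "a - q^n \<noteq> 0" "a*b - q^n \<noteq> 0" "a*b - q^n*q^k \<noteq> 0" "a - 1 \<noteq> 0"
    using gen_pow[OF ga, of n] gen_pow[OF gab, of n] gen_pow[OF gab, of "n+k"] gen_pow[OF ga, of 0]
    by (auto simp: power_add)
  note e1 = c1[OF a0 nz(1) nz(2)] and e2 = c2[OF a0 nz(3) nz(4)]
  define R1 where "R1 = ((1 - 1/a) * (1 - q^n*q^n/(a*b))) / ((1 - q^n/a) * (1 - q^n/(a*b)))"
  define R2 where "R2 = ((1 - q^n/(a*b)) * (1 - q^k/a)) / ((1 - q^n*q^k/(a*b)) * (1 - 1/a))"
  have h: "cf q s n k (q*a) b = cf q s n k a b * R1 * R2"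
    unfolding cf_pre_kp pre_a[OF q0 s0 ga gb gab] kp_a[OF q0 qn ga gb gab] R1_def R2_def by (simp add: ac_simps)
  have e1': "R1 * ((a - q^n) * (a*b - q^n)) = (a - 1) * (a*b - q^n*q^n)" using e1 unfolding R1_def .
  have e2': "R2 * ((a*b - q^n*q^k) * (a - 1)) = (a*b - q^n) * (a - q^k)" using e2 unfolding R2_def .
  have "cf q s n k (q*a) b * ((a - q^n) * (a*b - q^n*q^k)) * ((a - 1) * (a*b - q^n))
      = cf q s n k a b * (R1 * ((a - q^n) * (a*b - q^n))) * (R2 * ((a*b - q^n*q^k) * (a - 1)))"
    unfolding h by (simp only: ac_simps)
  also have "\<dots> = cf q s n k a b * ((a - 1) * (a*b - q^n*q^n)) * ((a*b - q^n) * (a - q^k))"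
    by (simp only: e1' e2')
  also have "\<dots> = cf q s n k a b * ((a*b - q^n*q^n) * (a - q^k)) * ((a - 1) * (a*b - q^n))"
    by (simp only: ac_simps)
  finally have "cf q s n k (q*a) b * ((a - q^n) * (a*b - q^n*q^k)) * ((a - 1) * (a*b - q^n))
      = cf q s n k a b * ((a*b - q^n*q^n) * (a - q^k)) * ((a - 1) * (a*b - q^n))" .
  then show ?thesis using nz by simp
qed

lemma glue2: fixes p0 p1 U V m A B s :: complex
  assumes "p1 * U = p0 * V" "U * m = A" "V * (s * m) = B" shows "p1 * A * s = p0 * B"
proof -
  have "p1 * A * s = (p1 * U) * m * s" using assms(2) by (simp add: ac_simps)
  also have "\<dots> = p0 * (V * (s * m))" using assms(1) by (simp add: ac_simps)
  finally show ?thesis using assms(3) by simp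
qed

lemma glueN: fixes p0 p1 k0 k1 q s a b T K :: complex
  assumes "p1 * ((a*b - q*T*T)*(a*b - q*q*T*T)) * s = p0 * (- ((1 - q*T) * (a - q*T) * (b - q*T) * (a*b - q*T)))"
    "k1 * ((q*T - K)*(a*b - q*T)) = k0 * ((q*T - 1)*(a*b - q*T*K))"
    "a*b - q*T \<noteq> 0"
  shows "(p0*k0) * ((1 - q*T)^2 * (a - q*T) * (b - q*T) * (a*b - q*T*K)) = (p1*k1) * (s * (a*b - q*T*T) * (a*b - q*q*T*T) * (q*T - K))"
proof -
  have "((p0*k0) * ((1 - q*T)^2 * (a - q*T) * (b - q*T) * (a*b - q*T*K))) * (a*b - q*T)
      = ((p1*k1) * (s * (a*b - q*T*T) * (a*b - q*q*T*T) * (q*T - K))) * (a*b - q*T)"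
    using assms(1,2) by algebra
  then show ?thesis using assms(3) by simp
qed

lemma cfS:
  assumes q0: "q \<noteq> 0" and qn: "\<And>i. q ^ Suc i \<noteq> 1"
    and ga: "gen q a" and gb: "gen q b"
  shows "cf q s n (Suc k) a b * (q^n * (1 - q*q^k)^2 * (a - q*q^k) * (b - q*q^k))
       = cf q s n k a b * (q * (q^n - q^k) * (a*b - q*q^n*q^k))"
proof -
  have a0: "a \<noteq> 0" "b \<noteq> 0" using ga gb unfolding gen_def by auto
  have nz: "1 - q*q^k \<noteq> 0" "a - q*q^k \<noteq> 0" "b - q*q^k \<noteq> 0"
    using qn[of k] gen_pow[OF ga, of "Suc k"] gen_pow[OF gb, of "Suc k"] by auto
  have r: "(q * ((1 - inverse (q^n) * q^k) * (1 - q^(n+1)/(a*b) * q^k)) /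
      ((1 - q*q^k) * (1 - q*q^k) * (1 - q/a*q^k) * (1 - q/b*q^k))) * (q^n * (1 - q*q^k)^2 * (a - q*q^k) * (b - q*q^k))
      = (q * (q^n - q^k) * (a*b - q*q^n*q^k))"
    by (rule c3) (use nz a0 q0 in auto)
  show ?thesis unfolding cf_pre_kp kp_step[OF q0 qn ga gb]
    using r by (metis (no_types, lifting) mult.assoc)
qed

lemma cfN:
  assumes q0: "q \<noteq> 0" and s0: "s \<noteq> 0" and qn: "\<And>i. q ^ Suc i \<noteq> 1"
    and ga: "gen q a" and gb: "gen q b" and gab: "gen q (a*b)"
  shows "cf q s n k a b * ((1 - q*q^n)^2 * (a - q*q^n) * (b - q*q^n) * (a*b - q*q^n*q^k))
       = cf q s (Suc n) k a b * (s * (a*b - q*q^n*q^n) * (a*b - q*q*q^n*q^n) * (q*q^n - q^k))"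
proof -
  have a0: "a \<noteq> 0" "b \<noteq> 0" using ga gb unfolding gen_def by auto
  have P1: "q^(n+1) = q*q^n" and PS: "q^(Suc n) = q*q^n" by simp_all
  have qT: "q*q^n \<noteq> 0" using q0 by simp
  have h1: "pre q s (Suc n) a b * ((a*b - q*q^n*q^n)*(a*b - q*q*q^n*q^n)) * s
      = pre q s n a b * (- ((1 - q*q^n) * (a - q*q^n) * (b - q*q^n) * (a*b - q*q^n)))"
    by (rule glue2[OF pre_n[OF q0 s0 qn ga gb gab, of n] c4a[OF P1 a0] c4b[OF P1 a0 s0]])
  have h2: "kp q (Suc n) k a b * ((q*q^n - q^k)*(a*b - q*q^n)) = kp q n k a b * ((q*q^n - 1)*(a*b - q*q^n*q^k))"
  proof -
    have "kp q (Suc n) k a b * ((q*q^n - q^k)*(a*b - q*q^n))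
        = (kp q (Suc n) k a b * ((1 - inverse (q^(Suc n)) * q^k) * (1 - q^(n+1)/(a*b)))) * (q*q^n*(a*b))"
      using c5a[where K="q^k", OF P1 PS a0 qT] by (simp add: ac_simps)
    also have "\<dots> = kp q n k a b * (((1 - inverse (q^(Suc n))) * (1 - q^(n+1)/(a*b) * q^k)) * (q*q^n*(a*b)))"
      unfolding kp_n[OF q0] by (simp add: ac_simps)
    also have "\<dots> = kp q n k a b * ((q*q^n - 1)*(a*b - q*q^n*q^k))"
      using c5b[where K="q^k", OF P1 PS a0 qT] by simp
    finally show ?thesis .
  qed
  have nz: "a*b - q*q^n \<noteq> 0" using gen_pow[OF gab, of "Suc n"] by simp
  show ?thesis unfolding cf_pre_kp by (rule glueN[OF h1 h2 nz])
qed



lemma glueI: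
  fixes X C Y L q s a b t K :: complex
  assumes hA: "X * ((a - q*t) * (a*b - q*t*K)) = C * ((a*b - q*t*(q*t)) * (a - K))"
    and hN: "Y * ((1 - q*t)^2 * (a - q*t) * (b - q*t) * (a*b - q*t*K)) = C * (s * (a*b - q*t*t) * (a*b - q*q*t*t) * (q*t - K))"
    and hL: "L * (s * (a*b - q*t*t) * (a*b - q*q*t*t)) = a * (1 - q*t)^2 * (b - q*t)^2"
    and nz: "a - q*t \<noteq> 0" "a*b - q*t*K \<noteq> 0" "1 - q*t \<noteq> 0" "b - q*t \<noteq> 0" "s \<noteq> 0"
      "a*b - q*t*t \<noteq> 0" "a*b - q*q*t*t \<noteq> 0"
  shows "X = C + L * Y"
proof -
  define G where "G = s * (a*b - q*t*t) * (a*b - q*q*t*t) * (1 - q*t)^2 * (b - q*t)"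
  have G0: "G \<noteq> 0" unfolding G_def using nz by simp
  have "(L * Y * ((a - q*t) * (a*b - q*t*K))) * G = (L * (s * (a*b - q*t*t) * (a*b - q*q*t*t))) * (Y * ((1 - q*t)^2 * (a - q*t) * (b - q*t) * (a*b - q*t*K)))"
    unfolding G_def by (simp only: ac_simps)
  also have "\<dots> = (a * (1 - q*t)^2 * (b - q*t)^2) * (C * (s * (a*b - q*t*t) * (a*b - q*q*t*t) * (q*t - K)))"
    by (simp only: hL hN)
  also have "\<dots> = (C * a * (b - q*t) * (q*t - K)) * G"
    unfolding G_def by (simp only: ac_simps power2_eq_square)
  finally have e: "L * Y * ((a - q*t) * (a*b - q*t*K)) = C * a * (b - q*t) * (q*t - K)"
    using G0 by simp
  have poly: "(a*b - q*t*(q*t)) * (a - K) = (a - q*t) * (a*b - q*t*K) + a * (b - q*t) * (q*t - K)"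
    by algebra
  have "X * ((a - q*t) * (a*b - q*t*K)) = (C + L * Y) * ((a - q*t) * (a*b - q*t*K))"
    unfolding hA distrib_right e using poly by (simp add: algebra_simps)
  then show ?thesis using nz by simp
qed


lemma keyII: fixes s T J c q b :: complex
  assumes nz: "s \<noteq> 0" "T \<noteq> 0" "J \<noteq> 0" "c \<noteq> 0" "1 - q*J \<noteq> 0" "c - q*J \<noteq> 0" "b - q*J \<noteq> 0" "c*b - q*T*T \<noteq> 0"
    and qs: "q = s^2"
  shows "q*(T-J)*(c*b-q*T*J)/(T*(1-q*J)^2*(c-q*J)*(b-q*J)) * (s+q*q*c*c/s-c*(1+q^3*J*J)/(s*J)) + q*c/(s*J)
  = q*c*((1-q*T)^2*(b-q*T)*(c*b-q*T*J)/(s*T*(c*b-q*T*T)*(1-q*J)^2*(b-q*J))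
       + s*(c*b-T)^2*(c-T)*q*(T-J)/(c*(c*b-q*T*T)*T*(1-q*J)^2*(b-q*J)))"
proof -
  define Dc where "Dc = s*J*T*(1-q*J)^2*(b-q*J)*(c*b-q*T*T)"
  have Dc0: "Dc \<noteq> 0" unfolding Dc_def using nz by simp
  have a0: "(s+q*q*c*c/s-c*(1+q^3*J*J)/(s*J)) = (s*s*J + q*q*c*c*J - c*(1+q^3*J*J))/(s*J)"
    using nz by (simp add: field_simps)
  have a0': "s*s*J + q*q*c*c*J - c*(1+q^3*J*J) = (c - q*J)*(q*q*c*J - 1)"
  proof -
    have ss: "s*s = q" using qs by (simp add: power2_eq_square)
    show ?thesis unfolding ss by algebra
  qed
  have a1: "(s+q*q*c*c/s-c*(1+q^3*J*J)/(s*J)) = (c - q*J)*(q*q*c*J - 1)/(s*J)"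
    unfolding a0 a0' ..
  have e1: "q*(T-J)*(c*b-q*T*J)/(T*(1-q*J)^2*(c-q*J)*(b-q*J)) * ((c - q*J)*(q*q*c*J - 1)/(s*J))
      = q*((T-J)*(c*b-q*T*J)*(q*q*c*J-1)*(c*b-q*T*T))/Dc"
    unfolding Dc_def using nz by (simp add: divide_simps ac_simps)
  have e2: "q*c/(s*J) = q*(c*T*(1-q*J)^2*(b-q*J)*(c*b-q*T*T))/Dc"
    unfolding Dc_def using nz by (simp add: divide_simps ac_simps)
  have e3: "q*c*((1-q*T)^2*(b-q*T)*(c*b-q*T*J)/(s*T*(c*b-q*T*T)*(1-q*J)^2*(b-q*J)))
      = q*(c*J*(1-q*T)^2*(b-q*T)*(c*b-q*T*J))/Dc"
    unfolding Dc_def using nz by (simp add: divide_simps ac_simps)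
  have e4: "q*c*(s*(c*b-T)^2*(c-T)*q*(T-J)/(c*(c*b-q*T*T)*T*(1-q*J)^2*(b-q*J)))
      = q*(q*(s*s)*J*(c*b-T)^2*(c-T)*(T-J))/Dc"
    unfolding Dc_def using nz by (simp add: divide_simps ac_simps)
  have P: "(T-J)*(c*b-q*T*J)*(q*q*c*J-1)*(c*b-q*T*T) + c*T*(1-q*J)^2*(b-q*J)*(c*b-q*T*T)
     = c*J*(1-q*T)^2*(b-q*T)*(c*b-q*T*J) + q*(s*s)*J*(c*b-T)^2*(c-T)*(T-J)"
  proof -
    have ss: "s*s = q" using qs by (simp add: power2_eq_square)
    show ?thesis unfolding ss by algebra
  qed
  have R: "q*c*((1-q*T)^2*(b-q*T)*(c*b-q*T*J)/(s*T*(c*b-q*T*T)*(1-q*J)^2*(b-q*J))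
       + s*(c*b-T)^2*(c-T)*q*(T-J)/(c*(c*b-q*T*T)*T*(1-q*J)^2*(b-q*J)))
     = q*(c*J*(1-q*T)^2*(b-q*T)*(c*b-q*T*J) + q*(s*s)*J*(c*b-T)^2*(c-T)*(T-J))/Dc"
    unfolding distrib_left e3 e4 by (simp add: add_divide_distrib)
  have L: "q*(T-J)*(c*b-q*T*J)/(T*(1-q*J)^2*(c-q*J)*(b-q*J)) * (s+q*q*c*c/s-c*(1+q^3*J*J)/(s*J)) + q*c/(s*J)
     = q*((T-J)*(c*b-q*T*J)*(q*q*c*J-1)*(c*b-q*T*T) + c*T*(1-q*J)^2*(b-q*J)*(c*b-q*T*T))/Dc"
    unfolding a1 e1 e2 by (simp add: add_divide_distrib distrib_left)
  show ?thesis unfolding L R P ..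
qed

lemma solve: "(D::complex) \<noteq> 0 \<Longrightarrow> X * D = Y * N \<Longrightarrow> X = Y * (N / D)"
  by (simp add: field_simps)

lemma solve2: "(N::complex) \<noteq> 0 \<Longrightarrow> Y * D = X * N \<Longrightarrow> X = Y * (D / N)"
  by (simp add: field_simps)

lemma solve0: "(D::complex) \<noteq> 0 \<Longrightarrow> X * D = N \<Longrightarrow> X = N / D"
  by (simp add: field_simps)

lemma glueII:
  fixes C C1 Z V W W1 G q s c b T J :: complex
  assumes S1: "C1 * (T * (1 - q*J)^2 * (c - q*J) * (b - q*J)) = C * (q * (T - J) * (c*b - q*T*J))"
    and A1: "Z * ((c - T) * (c*b - T*(q*J))) = C1 * ((c*b - T*T) * (c - q*J))"
    and A0: "V * ((c - T) * (c*b - T*J)) = C * ((c*b - T*T) * (c - J))"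
    and N0: "V * ((1 - q*T)^2 * (q*c - q*T) * (b - q*T) * (q*c*b - q*T*J)) = W * (s * (q*c*b - q*T*T) * (q*c*b - q*q*T*T) * (q*T - J))"
    and S2: "W1 * (q*T * (1 - q*J)^2 * (q*c - q*J) * (b - q*J)) = W * (q * (q*T - J) * (q*c*b - q*(q*T)*J))"
    and Gh: "G * (c * (c*b - T*T) * (c*b - q*T*T)) = s * (c*b - T)^2 * (c - T)^2"
    and qs: "q = s^2"
    and nz: "s \<noteq> 0" "T \<noteq> 0" "J \<noteq> 0" "c \<noteq> 0" "q \<noteq> 0" "1 - q*J \<noteq> 0" "c - q*J \<noteq> 0" "b - q*J \<noteq> 0"
      "c - T \<noteq> 0" "c*b - T*J \<noteq> 0" "c*b - T*(q*J) \<noteq> 0" "c*b - T*T \<noteq> 0" "c*b - q*T*T \<noteq> 0" "q*T - J \<noteq> 0"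
      "c - J \<noteq> 0"
  shows "C1 * (s + (q*c)*(q*c)/s - (q*c)*(1 + q*(q*J)*(q*J))/(s*(q*J))) + C * ((q*c)/(s*J)) = (q*c) * (W1 + G*Z)"
proof -
  have f: "q*c - q*T = q*(c - T)" "q*c*b - q*T*J = q*(c*b - T*J)" "q*c*b - q*T*T = q*(c*b - T*T)"
    "q*c*b - q*q*T*T = q*(c*b - q*T*T)" "q*c*b - q*(q*T)*J = q*(c*b - q*T*J)" "q*c - q*J = q*(c - J)"
    by (simp_all add: algebra_simps)
  have C1e: "C1 = C * ((q * (T - J) * (c*b - q*T*J)) / (T * (1 - q*J)^2 * (c - q*J) * (b - q*J)))"
    by (rule solve[OF _ S1]) (use nz in simp)
  have Ze: "Z = C1 * (((c*b - T*T) * (c - q*J)) / ((c - T) * (c*b - T*(q*J))))"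
    by (rule solve[OF _ A1]) (use nz in simp)
  have Ve: "V = C * (((c*b - T*T) * (c - J)) / ((c - T) * (c*b - T*J)))"
    by (rule solve[OF _ A0]) (use nz in simp)
  have We: "W = V * (((1 - q*T)^2 * (q*c - q*T) * (b - q*T) * (q*c*b - q*T*J)) / (s * (q*c*b - q*T*T) * (q*c*b - q*q*T*T) * (q*T - J)))"
    by (rule solve2[OF _ N0]) (use nz in \<open>simp add: f\<close>)
  have W1e: "W1 = W * ((q * (q*T - J) * (q*c*b - q*(q*T)*J)) / (q*T * (1 - q*J)^2 * (q*c - q*J) * (b - q*J)))"
    by (rule solve[OF _ S2]) (use nz in \<open>simp add: f\<close>)
  have Ge: "G = s * (c*b - T)^2 * (c - T)^2 / (c * (c*b - T*T) * (c*b - q*T*T))"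
    by (rule solve0[OF _ Gh]) (use nz in simp)
  define X1 where "X1 = (1 - q*T)^2 * (b - q*T) * (c*b - q*T*J) / (s * T * (c*b - q*T*T) * (1 - q*J)^2 * (b - q*J))"
  define Y1 where "Y1 = s*(c*b-T)^2*(c-T)*q*(T-J)/(c*(c*b-q*T*T)*T*(1-q*J)^2*(b-q*J))"
  define sg where "sg = (q * (T - J) * (c*b - q*T*J)) / (T * (1 - q*J)^2 * (c - q*J) * (b - q*J))"
  have W1X: "W1 = C * X1"
  proof -
    have "W1 = C * (((c*b - T*T) * (c - J)) / ((c - T) * (c*b - T*J)) *
         (((1 - q*T)^2 * (q*c - q*T) * (b - q*T) * (q*c*b - q*T*J)) / (s * (q*c*b - q*T*T) * (q*c*b - q*q*T*T) * (q*T - J))) *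
         ((q * (q*T - J) * (q*c*b - q*(q*T)*J)) / (q*T * (1 - q*J)^2 * (q*c - q*J) * (b - q*J))))"
      unfolding W1e We Ve by (simp only: ac_simps)
    also have "\<dots> = C * X1" unfolding X1_def f using nz by (simp add: divide_simps ac_simps)
    finally show ?thesis .
  qed
  have GZ: "G * Z = C * Y1"
  proof -
    have "G * Z = C * (s * (c*b - T)^2 * (c - T)^2 / (c * (c*b - T*T) * (c*b - q*T*T)) *
       ((q * (T - J) * (c*b - q*T*J)) / (T * (1 - q*J)^2 * (c - q*J) * (b - q*J))) *
       (((c*b - T*T) * (c - q*J)) / ((c - T) * (c*b - T*(q*J)))))"
      unfolding Ge Ze C1e by (simp only: ac_simps)
    also have "\<dots> = C * Y1" unfolding Y1_def using nz by (simp add: divide_simps ac_simps power2_eq_square)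
    finally show ?thesis .
  qed
  have key: "sg * (s + q*q*c*c/s - c*(1+q^3*J*J)/(s*J)) + q*c/(s*J) = q*c*(X1 + Y1)"
    unfolding sg_def X1_def Y1_def by (rule keyII) (use nz qs in simp_all)
  have al: "(s + (q*c)*(q*c)/s - (q*c)*(1 + q*(q*J)*(q*J))/(s*(q*J))) = (s + q*q*c*c/s - c*(1+q^3*J*J)/(s*J))"
    using nz by (simp add: field_simps power3_eq_cube)
  have "C1 * (s + (q*c)*(q*c)/s - (q*c)*(1 + q*(q*J)*(q*J))/(s*(q*J))) + C * ((q*c)/(s*J))
      = C * (sg * (s + q*q*c*c/s - c*(1+q^3*J*J)/(s*J)) + q*c/(s*J))"
    unfolding al C1e sg_def[symmetric] by (simp add: distrib_left mult.assoc)
  also have "\<dots> = C * (q*c*(X1 + Y1))" using key by simp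
  also have "\<dots> = (q*c) * (W1 + G*Z)" unfolding W1X GZ by (simp add: algebra_simps)
  finally show ?thesis .
qed


lemma glueII0:
  fixes C0 V0 W0 G q s c b T :: complex
  assumes A0: "V0 * ((c - T) * (c*b - T)) = C0 * ((c*b - T*T) * (c - 1))"
    and N0: "V0 * ((1 - q*T)^2 * (q*c - q*T) * (b - q*T) * (q*c*b - q*T)) = W0 * (s * (q*c*b - q*T*T) * (q*c*b - q*q*T*T) * (q*T - 1))"
    and Gh: "G * (c * (c*b - T*T) * (c*b - q*T*T)) = s * (c*b - T)^2 * (c - T)^2"
    and qs: "q = s^2"
    and nz: "s \<noteq> 0" "c \<noteq> 0" "q \<noteq> 0" "c - T \<noteq> 0" "c*b - T \<noteq> 0" "c*b - T*T \<noteq> 0" "c*b - q*T*T \<noteq> 0" "q*T - 1 \<noteq> 0"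
  shows "C0 * (s + (q*c)*(q*c)/s - (q*c)*(1 + q)/s) = (q*c) * (W0 + G*V0)"
proof -
  have f: "q*c - q*T = q*(c - T)" "q*c*b - q*T = q*(c*b - T)" "q*c*b - q*T*T = q*(c*b - T*T)"
    "q*c*b - q*q*T*T = q*(c*b - q*T*T)"
    by (simp_all add: algebra_simps)
  have Ve: "V0 = C0 * (((c*b - T*T) * (c - 1)) / ((c - T) * (c*b - T)))"
    by (rule solve[OF _ A0]) (use nz in simp)
  have We: "W0 = V0 * (((1 - q*T)^2 * (q*c - q*T) * (b - q*T) * (q*c*b - q*T)) / (s * (q*c*b - q*T*T) * (q*c*b - q*q*T*T) * (q*T - 1)))"
    by (rule solve2[OF _ N0]) (use nz in \<open>simp add: f\<close>)
  have Ge: "G = s * (c*b - T)^2 * (c - T)^2 / (c * (c*b - T*T) * (c*b - q*T*T))"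
    by (rule solve0[OF _ Gh]) (use nz in simp)
  define Dc where "Dc = s * c * (c*b - q*T*T) * (q*T - 1)"
  have Dc0: "Dc \<noteq> 0" unfolding Dc_def using nz by simp
  have W0X: "(q*c) * W0 = C0 * ((q * c * c * (c - 1) * (1 - q*T)^2 * (b - q*T)) / Dc)"
  proof -
    have "(q*c) * W0 = C0 * ((q*c) * (((c*b - T*T) * (c - 1)) / ((c - T) * (c*b - T))) *
       (((1 - q*T)^2 * (q*c - q*T) * (b - q*T) * (q*c*b - q*T)) / (s * (q*c*b - q*T*T) * (q*c*b - q*q*T*T) * (q*T - 1))))"
      unfolding We Ve by (simp only: ac_simps)
    also have "\<dots> = C0 * ((q * c * c * (c - 1) * (1 - q*T)^2 * (b - q*T)) / Dc)"
      unfolding Dc_def f using nz by (simp add: divide_simps ac_simps)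
    finally show ?thesis .
  qed
  have GV: "(q*c) * (G * V0) = C0 * ((q * c * (s*s) * (c*b - T) * (c - T) * (c - 1) * (q*T - 1)) / Dc)"
  proof -
    have "(q*c) * (G * V0) = C0 * ((q*c) * (s * (c*b - T)^2 * (c - T)^2 / (c * (c*b - T*T) * (c*b - q*T*T))) *
        (((c*b - T*T) * (c - 1)) / ((c - T) * (c*b - T))))"
      unfolding Ge Ve by (simp only: ac_simps)
    also have "\<dots> = C0 * ((q * c * (s*s) * (c*b - T) * (c - T) * (c - 1) * (q*T - 1)) / Dc)"
      unfolding Dc_def using nz by (simp add: divide_simps ac_simps power2_eq_square)
    finally show ?thesis .
  qed
  have al: "(s + (q*c)*(q*c)/s - (q*c)*(1 + q)/s) = (c * (c*b - q*T*T) * (q*T - 1) * (s*s + q*q*c*c - q*c*(1+q))) / Dc"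
  proof -
    have "(s + (q*c)*(q*c)/s - (q*c)*(1 + q)/s) = (s*s + q*q*c*c - q*c*(1+q))/s"
      using nz by (simp add: field_simps)
    also have "\<dots> = (c * (c*b - q*T*T) * (q*T - 1) * (s*s + q*q*c*c - q*c*(1+q))) / Dc"
      unfolding Dc_def using nz by (simp add: divide_simps ac_simps)
    finally show ?thesis .
  qed
  have P0: "c * (c*b - q*T*T) * (q*T - 1) * (s*s + q*q*c*c - q*c*(1+q))
     = q * c * c * (c - 1) * (1 - q*T)^2 * (b - q*T) + q * c * (s*s) * (c*b - T) * (c - T) * (c - 1) * (q*T - 1)"
  proof -
    have ss: "s*s = q" using qs by (simp add: power2_eq_square)
    show ?thesis unfolding ss by algebra
  qed
  have "(q*c) * (W0 + G*V0) = C0 * ((q * c * c * (c - 1) * (1 - q*T)^2 * (b - q*T) + q * c * (s*s) * (c*b - T) * (c - T) * (c - 1) * (q*T - 1)) / Dc)"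
    unfolding distrib_left W0X GV by (simp add: add_divide_distrib distrib_left)
  then show ?thesis unfolding al P0 by simp
qed


lemma scal_rec:
  fixes s x A K q :: complex
  assumes "s \<noteq> 0" "x \<noteq> 0" "K \<noteq> 0" "q = s^2"
  shows "((s*x + A)*(s + x*A))/(s*x) = (s + A*A/s - A*(1 + q*K*K)/(s*K)) + A/(s*K) * ((1 - (- s*x)*K) * (1 - (- s/x)*K))"
proof -
  have L: "((s*x + A)*(s + x*A))/(s*x) = ((s*x + A)*(s + x*A)*K)/(s*x*K)" using assms by simp
  have R: "(s + A*A/s - A*(1 + q*K*K)/(s*K)) + A/(s*K) * ((1 - (- s*x)*K) * (1 - (- s/x)*K))
     = (x*(s*s*K + A*A*K - A*(1+q*K*K)) + A*(1+s*x*K)*(x+s*K))/(s*x*K)"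
    using assms by (simp add: field_simps)
  have N: "(s*x + A)*(s + x*A)*K = x*(s*s*K + A*A*K - A*(1+q*K*K)) + A*(1+s*x*K)*(x+s*K)"
  proof -
    have ss: "q = s*s" using assms(4) by (simp add: power2_eq_square)
    show ?thesis unfolding ss by algebra
  qed
  show ?thesis unfolding L R N ..
qed

lemma ph_rec:
  fixes s x A q :: complex
  assumes "s \<noteq> 0" "x \<noteq> 0" "q \<noteq> 0" "q = s^2"
  shows "((s*x + A)*(s + x*A))/(s*x) * ph q s x k
     = (s + A*A/s - A*(1 + q*q^k*q^k)/(s*q^k)) * ph q s x k + A/(s*q^k) * ph q s x (Suc k)"
proof -
  have "ph q s x (Suc k) = ph q s x k * ((1 - (- s*x)*q^k) * (1 - (- s/x)*q^k))"
    unfolding ph_def qpoch_Suc by (simp add: ac_simps)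
  moreover have "((s*x + A)*(s + x*A))/(s*x) = (s + A*A/s - A*(1 + q*q^k*q^k)/(s*q^k)) + A/(s*q^k) * ((1 - (- s*x)*q^k) * (1 - (- s/x)*q^k))"
    using scal_rec[OF assms(1,2) _ assms(4), of "q^k" A] assms(3) by simp
  ultimately show ?thesis by (simp only: distrib_right distrib_left ac_simps)
qed

lemma cf_top: "q \<noteq> 0 \<Longrightarrow> cf q s m (Suc m) a b = 0"
  unfolding cf_def by (simp add: qpoch_Suc)

lemma qpow_ne1: fixes q :: complex assumes "0 < norm q" "norm q < 1" shows "q ^ Suc i \<noteq> 1"
proof
  assume "q ^ Suc i = 1"
  then have "norm q ^ Suc i = 1" by (metis norm_one norm_power)
  moreover have "norm q ^ Suc i < 1" using assms by (rule power_Suc_less_one)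
  ultimately show False by simp
qed

lemma qpow_inj: fixes q :: complex assumes "0 < norm q" "norm q < 1" "i \<noteq> j" shows "q ^ i \<noteq> q ^ j"
proof
  assume "q ^ i = q ^ j"
  then have "norm q ^ i = norm q ^ j" by (metis norm_power)
  moreover have "norm q ^ i \<noteq> norm q ^ j"
    using assms power_strict_decreasing_iff[of "norm q"] by (metis linorder_neqE_nat less_irrefl)
  ultimately show False by simp
qed

lemma gen_sub: "gen q c \<Longrightarrow> c - q^i \<noteq> 0" using gen_pow[of q c i] by simp
lemma gen_sub2: "gen q c \<Longrightarrow> c - q^i*q^j \<noteq> 0" using gen_pow[of q c "i+j"] by (simp add: power_add)
lemma gen_sub3: "gen q c \<Longrightarrow> c - q*q^i \<noteq> 0" using gen_pow[of q c "Suc i"] by simp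
lemma gen_sub4: "gen q c \<Longrightarrow> c - q*q^i*q^j \<noteq> 0" using gen_pow[of q c "Suc (i+j)"] by (simp add: power_add mult.assoc)
lemma gen_sub5: "gen q c \<Longrightarrow> c - q*q*q^i*q^j \<noteq> 0" using gen_pow[of q c "Suc (Suc (i+j))"] by (simp add: power_add mult.assoc)

lemma II_sum:
  fixes q s c b x G :: complex
  assumes q0: "q \<noteq> 0" and s0: "s \<noteq> 0" and qs: "q = s^2" and x0: "x \<noteq> 0"
    and qn: "\<And>i. q ^ Suc i \<noteq> 1" and qinj: "\<And>i j. i \<noteq> j \<Longrightarrow> q ^ i \<noteq> q ^ j"
    and gc: "gen q c" and gb: "gen q b" and gcb: "gen q (c*b)" and gqc: "gen q (q*c)" and gqcb: "gen q (q*c*b)"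
    and Gh: "G * (c * (c*b - q^n*q^n) * (c*b - q*q^n*q^n)) = s * (c*b - q^n)^2 * (c - q^n)^2"
  shows "((s*x + q*c)*(s + x*(q*c)))/(s*x) * (\<Sum>k\<le>n. cf q s n k c b * ph q s x k)
       = (q*c) * (\<Sum>k\<le>Suc n. cf q s (Suc n) k (q*c) b * ph q s x k)
         + (q*c) * G * (\<Sum>k\<le>n. cf q s n k (q*c) b * ph q s x k)"
proof -
  let ?A = "q*c"
  define al where "al k = s + ?A*?A/s - ?A*(1 + q*q^k*q^k)/(s*q^k)" for k
  define be where "be k = ?A/(s*q^k)" for k
  define f where "f k = cf q s n k c b * al k * ph q s x k" for k
  define g where "g k = cf q s n k c b * be k * ph q s x (Suc k)" for k
  define e where "e k = ?A * (cf q s (Suc n) k ?A b + G * cf q s n k ?A b)" for k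
  have c0: "c \<noteq> 0" "b \<noteq> 0" using gc gb unfolding gen_def by auto
  have L1: "((s*x + q*c)*(s + x*(q*c)))/(s*x) * (\<Sum>k\<le>n. cf q s n k c b * ph q s x k)
      = (\<Sum>k\<le>n. f k) + (\<Sum>k\<le>n. g k)"
    unfolding sum_distrib_left sum.distrib[symmetric]
  proof (rule sum.cong[OF refl])
    fix k assume "k \<in> {..n}"
    show "((s*x + q*c)*(s + x*(q*c)))/(s*x) * (cf q s n k c b * ph q s x k) = f k + g k"
    proof -
      have pr: "((s*x + q*c)*(s + x*(q*c)))/(s*x) * ph q s x k = al k * ph q s x k + be k * ph q s x (Suc k)"
        using ph_rec[OF s0 x0 q0 qs, of ?A k] unfolding al_def be_def .
      have "((s*x + q*c)*(s + x*(q*c)))/(s*x) * (cf q s n k c b * ph q s x k)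
          = cf q s n k c b * (((s*x + q*c)*(s + x*(q*c)))/(s*x) * ph q s x k)" by (simp only: ac_simps)
      also have "\<dots> = cf q s n k c b * (al k * ph q s x k + be k * ph q s x (Suc k))" unfolding pr ..
      also have "\<dots> = f k + g k" unfolding f_def g_def by (simp only: distrib_left ac_simps)
      finally show ?thesis .
    qed
  qed
  have f_ext: "(\<Sum>k\<le>n. f k) = (\<Sum>k\<le>Suc n. f k)"
    using cf_top[OF q0, of s n c b] unfolding f_def by simp
  have LHS: "((s*x + q*c)*(s + x*(q*c)))/(s*x) * (\<Sum>k\<le>n. cf q s n k c b * ph q s x k)
      = f 0 + (\<Sum>j\<le>n. f (Suc j) + g j)"
    unfolding L1 f_ext sum.atMost_Suc_shift sum.distrib by simp
  have RHS: "(q*c) * (\<Sum>k\<le>Suc n. cf q s (Suc n) k (q*c) b * ph q s x k)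
         + (q*c) * G * (\<Sum>k\<le>n. cf q s n k (q*c) b * ph q s x k)
      = e 0 * ph q s x 0 + (\<Sum>j\<le>n. e (Suc j) * ph q s x (Suc j))"
  proof -
    have "(\<Sum>k\<le>n. cf q s n k (q*c) b * ph q s x k) = (\<Sum>k\<le>Suc n. cf q s n k (q*c) b * ph q s x k)"
      using cf_top[OF q0, of s n "q*c" b] by simp
    then have "(q*c) * (\<Sum>k\<le>Suc n. cf q s (Suc n) k (q*c) b * ph q s x k)
         + (q*c) * G * (\<Sum>k\<le>n. cf q s n k (q*c) b * ph q s x k) = (\<Sum>k\<le>Suc n. e k * ph q s x k)"
      unfolding e_def by (simp add: sum_distrib_left sum.distrib[symmetric] algebra_simps)
    then show ?thesis by (simp only: sum.atMost_Suc_shift)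
  qed
  have T0: "f 0 = e 0 * ph q s x 0"
  proof -
    have "cf q s n 0 c b * (s + (q*c)*(q*c)/s - (q*c)*(1 + q)/s) = (q*c) * (cf q s (Suc n) 0 (q*c) b + G * cf q s n 0 (q*c) b)"
    proof (rule glueII0[OF _ _ Gh qs])
      show "cf q s n 0 (q*c) b * ((c - q^n) * (c*b - q^n)) = cf q s n 0 c b * ((c*b - q^n*q^n) * (c - 1))"
        using cfA[OF q0 s0 qn gc gb gcb, of n 0] by simp
      show "cf q s n 0 (q*c) b * ((1 - q*q^n)^2 * (q*c - q*q^n) * (b - q*q^n) * (q*c*b - q*q^n)) =
            cf q s (Suc n) 0 (q*c) b * (s * (q*c*b - q*q^n*q^n) * (q*c*b - q*q*q^n*q^n) * (q*q^n - 1))"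
        using cfN[OF q0 s0 qn gqc gb gqcb, of n 0] by simp
      show "s \<noteq> 0" "c \<noteq> 0" "q \<noteq> 0" using s0 c0 q0 by auto
      show "c - q^n \<noteq> 0" "c*b - q^n \<noteq> 0" "c*b - q^n*q^n \<noteq> 0" "c*b - q*q^n*q^n \<noteq> 0" "q*q^n - 1 \<noteq> 0"
        using gen_sub[OF gc] gen_sub[OF gcb] gen_sub2[OF gcb] gen_sub4[OF gcb] qn[of n] by auto
    qed
    then show ?thesis unfolding f_def e_def al_def by simp
  qed
  have TS: "f (Suc j) + g j = e (Suc j) * ph q s x (Suc j)" if jn: "j \<le> n" for j
  proof -
    have "cf q s n (Suc j) c b * (s + (q*c)*(q*c)/s - (q*c)*(1 + q*(q*q^j)*(q*q^j))/(s*(q*q^j))) + cf q s n j c b * ((q*c)/(s*q^j))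
        = (q*c) * (cf q s (Suc n) (Suc j) (q*c) b + G * cf q s n (Suc j) (q*c) b)"
    proof (rule glueII[OF _ _ _ _ _ Gh qs])
      show "cf q s n (Suc j) c b * (q^n * (1 - q*q^j)^2 * (c - q*q^j) * (b - q*q^j)) = cf q s n j c b * (q * (q^n - q^j) * (c*b - q*q^n*q^j))"
        by (rule cfS[OF q0 qn gc gb])
      show "cf q s n (Suc j) (q*c) b * ((c - q^n) * (c*b - q^n*(q*q^j))) = cf q s n (Suc j) c b * ((c*b - q^n*q^n) * (c - q*q^j))"
        using cfA[OF q0 s0 qn gc gb gcb, of n "Suc j"] by simp
      show "cf q s n j (q*c) b * ((c - q^n) * (c*b - q^n*q^j)) = cf q s n j c b * ((c*b - q^n*q^n) * (c - q^j))"
        by (rule cfA[OF q0 s0 qn gc gb gcb])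
      show "cf q s n j (q*c) b * ((1 - q*q^n)^2 * (q*c - q*q^n) * (b - q*q^n) * (q*c*b - q*q^n*q^j)) =
            cf q s (Suc n) j (q*c) b * (s * (q*c*b - q*q^n*q^n) * (q*c*b - q*q*q^n*q^n) * (q*q^n - q^j))"
        by (rule cfN[OF q0 s0 qn gqc gb gqcb])
      show "cf q s (Suc n) (Suc j) (q*c) b * (q*q^n * (1 - q*q^j)^2 * (q*c - q*q^j) * (b - q*q^j)) =
            cf q s (Suc n) j (q*c) b * (q * (q*q^n - q^j) * (q*c*b - q*(q*q^n)*q^j))"
        using cfS[OF q0 qn gqc gb, where n="Suc n" and k=j and s=s] by simp
      show "s \<noteq> 0" "q^n \<noteq> 0" "q^j \<noteq> 0" "c \<noteq> 0" "q \<noteq> 0" using s0 c0 q0 by auto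
      show "1 - q*q^j \<noteq> 0" using qn[of j] by simp
      show "c - q*q^j \<noteq> 0" "b - q*q^j \<noteq> 0" "c - q^n \<noteq> 0" "c*b - q^n*q^j \<noteq> 0"
        "c*b - q^n*(q*q^j) \<noteq> 0" "c*b - q^n*q^n \<noteq> 0" "c*b - q*q^n*q^n \<noteq> 0" "c - q^j \<noteq> 0"
        using gen_sub3[OF gc] gen_sub3[OF gb] gen_sub[OF gc] gen_sub2[OF gcb] gen_sub4[OF gcb, of j n]
          gen_sub4[OF gcb, of n n] by (auto simp: ac_simps)
      show "q*q^n - q^j \<noteq> 0" using qinj[of "Suc n" j] jn by simp
    qed
    note E = this
    have "f (Suc j) + g j = (cf q s n (Suc j) c b * (s + (q*c)*(q*c)/s - (q*c)*(1 + q*(q*q^j)*(q*q^j))/(s*(q*q^j))) + cf q s n j c b * ((q*c)/(s*q^j))) * ph q s x (Suc j)"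
      unfolding f_def g_def al_def be_def by (simp add: distrib_right)
    also have "\<dots> = e (Suc j) * ph q s x (Suc j)" unfolding E e_def ..
    finally show ?thesis .
  qed
  show ?thesis unfolding LHS RHS T0 using TS by simp
qed

lemma I_sum:
  fixes q s a b x L :: complex
  assumes q0: "q \<noteq> 0" and s0: "s \<noteq> 0" and qn: "\<And>i. q ^ Suc i \<noteq> 1"
    and ga: "gen q a" and gb: "gen q b" and gab: "gen q (a*b)"
    and hL: "L * (s * (a*b - q*q^m*q^m) * (a*b - q*q*q^m*q^m)) = a * (1 - q*q^m)^2 * (b - q*q^m)^2"
  shows "(\<Sum>k\<le>Suc m. cf q s (Suc m) k (q*a) b * ph q s x k)
       = (\<Sum>k\<le>Suc m. cf q s (Suc m) k a b * ph q s x k) + L * (\<Sum>k\<le>m. cf q s m k a b * ph q s x k)"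
proof -
  have ext: "(\<Sum>k\<le>m. cf q s m k a b * ph q s x k) = (\<Sum>k\<le>Suc m. cf q s m k a b * ph q s x k)"
    using cf_top[OF q0, of s m a b] by simp
  have "(\<Sum>k\<le>Suc m. cf q s (Suc m) k (q*a) b * ph q s x k)
      = (\<Sum>k\<le>Suc m. (cf q s (Suc m) k a b + L * cf q s m k a b) * ph q s x k)"
  proof (rule sum.cong[OF refl])
    fix k
    have "cf q s (Suc m) k (q*a) b = cf q s (Suc m) k a b + L * cf q s m k a b"
    proof (rule glueI[OF _ _ hL])
      show "cf q s (Suc m) k (q*a) b * ((a - q*q^m) * (a*b - q*q^m*q^k)) = cf q s (Suc m) k a b * ((a*b - q*q^m*(q*q^m)) * (a - q^k))"
        using cfA[OF q0 s0 qn ga gb gab, of "Suc m" k] by simp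
      show "cf q s m k a b * ((1 - q*q^m)^2 * (a - q*q^m) * (b - q*q^m) * (a*b - q*q^m*q^k)) =
            cf q s (Suc m) k a b * (s * (a*b - q*q^m*q^m) * (a*b - q*q*q^m*q^m) * (q*q^m - q^k))"
        by (rule cfN[OF q0 s0 qn ga gb gab])
      show "a - q*q^m \<noteq> 0" "a*b - q*q^m*q^k \<noteq> 0" "b - q*q^m \<noteq> 0" "a*b - q*q^m*q^m \<noteq> 0" "a*b - q*q*q^m*q^m \<noteq> 0"
        using gen_sub3[OF ga] gen_sub4[OF gab] gen_sub3[OF gb] gen_sub5[OF gab] by auto
      show "1 - q*q^m \<noteq> 0" using qn[of m] by simp
      show "s \<noteq> 0" by (rule s0)
    qed
    then show "cf q s (Suc m) k (q*a) b * ph q s x k = (cf q s (Suc m) k a b + L * cf q s m k a b) * ph q s x k"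
      by simp
  qed
  also have "\<dots> = (\<Sum>k\<le>Suc m. cf q s (Suc m) k a b * ph q s x k) + L * (\<Sum>k\<le>Suc m. cf q s m k a b * ph q s x k)"
    by (simp only: distrib_right sum.distrib sum_distrib_left mult.assoc)
  finally show ?thesis unfolding ext .
qed

lemma lamL:
  fixes q s a b t :: complex
  assumes "a \<noteq> 0" "b \<noteq> 0" "s \<noteq> 0" "a*b - q*t*t \<noteq> 0" "a*b - q*q*t*t \<noteq> 0"
  shows "((1/s) * (1 - q*t)^2 * (1 - q*t/b)^2 / (a * (1 - q*t*t/(a*b)) * (1 - q*q*t*t/(a*b))))
        * (s * (a*b - q*t*t) * (a*b - q*q*t*t)) = a * (1 - q*t)^2 * (b - q*t)^2"
proof -
  have e: "1 - q*t/b = (b - q*t)/b" "1 - q*t*t/(a*b) = (a*b - q*t*t)/(a*b)" "1 - q*q*t*t/(a*b) = (a*b - q*q*t*t)/(a*b)"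
    using assms by (auto simp: field_simps)
  show ?thesis unfolding e using assms by (simp add: divide_simps power2_eq_square)
qed

lemma gamL:
  fixes q s c b T Tm T2 T2p :: complex
  assumes "c \<noteq> 0" "b \<noteq> 0" "s \<noteq> 0" "1 - T \<noteq> 0" "b - T \<noteq> 0" "c*b - Tm \<noteq> 0" "c*b - T*T \<noteq> 0" "c*b - q*T*T \<noteq> 0"
    and T2: "T2 = T*T" and T2p: "T2p = q*T*T"
  shows "((1 - T)^2 * (1 - T/(c*b))^2 * (1 - T/c)^2 * (1 - T/b)^2) / ((1 - Tm/(c*b)) * (1 - T2/(c*b))^2 * (1 - T2p/(c*b)))
      / ((1/s) * (1 - T)^2 * (1 - T/b)^2 / (c * (1 - Tm/(c*b)) * (1 - T2/(c*b))))
      * (c * (c*b - T*T) * (c*b - q*T*T)) = s * (c*b - T)^2 * (c - T)^2"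
proof -
  have e: "1 - T/(c*b) = (c*b - T)/(c*b)" "1 - T/c = (c - T)/c" "1 - T/b = (b - T)/b" "1 - Tm/(c*b) = (c*b - Tm)/(c*b)"
    "1 - T2/(c*b) = (c*b - T*T)/(c*b)" "1 - T2p/(c*b) = (c*b - q*T*T)/(c*b)"
    using assms by (auto simp: field_simps)
  show ?thesis unfolding e using assms by (simp add: divide_simps power2_eq_square)
qed

lemma gen_div: assumes "q \<noteq> 0" "gen q y" shows "gen q (y/q)"
  unfolding gen_def
proof
  show "y/q \<noteq> 0" using assms unfolding gen_def by simp
  show "\<forall>m::int. y/q \<noteq> q powi m"
  proof
    fix m :: int
    show "y/q \<noteq> q powi m"
    proof
      assume "y/q = q powi m"
      then have "y = q powi m * q powi 1" using assms(1) by (simp add: field_simps)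
      also have "\<dots> = q powi (m+1)" using assms(1) by (simp add: power_int_add)
      finally show False using assms(2) unfolding gen_def by blast
    qed
  qed
qed

lemma rearr1:
  fixes z r u D H N1 P1 N2 P2 :: complex
  assumes "u \<noteq> 0" "D \<noteq> 0"
  shows "z * (1/r) * (- 1 / u * (N1 * P1) + H / (D * u) * (N2 * P2)) = z * (1/r) / u * (- N1 * P1 + N2 * (H / D * P2))"
  using assms by (simp add: field_simps)

lemma rearr2:
  fixes z r u a N1 N2 Nn1 Nm Nn Pn1 Pm Pn L ga la :: complex
  assumes "Nn1 \<noteq> 0" "Nm \<noteq> 0" "Nn \<noteq> 0" "r \<noteq> 0" "u \<noteq> 0"
  shows "z * (1/r) / u * (- N1 * (Pn + L * Pm) + N2 * (a * Pn1 + a * (ga / la) * Pn))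
    = z * (1 / r) / u *
       ( a * N2 / Nn1 * (Nn1 * Pn1)
       - N1 / Nm * L * (Nm * Pm)
       + ( a * ga / la * (N2 / Nn) - N1 / Nn ) * (Nn * Pn) )"
  using assms by (simp add: field_simps)

lemma partA2:
  fixes q r :: complex and \<nu> :: "nat \<Rightarrow> complex \<Rightarrow> complex \<Rightarrow> complex"
    and n :: nat and x x0 x1 :: complex
  assumes q: "0 < norm q" "norm q < 1"
    and r: "r ^ 4 = q"
    and nu: "\<And>m a b. \<nu> m a b \<noteq> 0"
    and n: "n \<ge> 1"
    and gen_x: "x \<noteq> 0" and gen0: "x0 \<noteq> 0" and gen1: "x1 \<noteq> 0"
    and generic: "\<And>m::int. x0 ^ 2 \<noteq> q powi m \<and> x1 ^ 2 \<noteq> q powi m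
                              \<and> x0 ^ 2 * x1 ^ 2 \<noteq> q powi m"
  shows
    "A2 r (Pbar q r \<nu> n) x x0 x1 =
       \<i> * (1 / r) / (1 - x0 ^ 2) *
       ( x0 ^ 2 * \<nu> n (x0 / r ^ 2) x1 / \<nu> (n + 1) x0 x1 * Pbar q r \<nu> (n + 1) x x0 x1
       - \<nu> n (r ^ 2 * x0) x1 / \<nu> (n - 1) x0 x1 * lambdaAW q r n x0 x1 * Pbar q r \<nu> (n - 1) x x0 x1
       + ( x0 ^ 2 * gammaAW q n (x0 / r ^ 2) x1 / lambdaAW q r n (x0 / r ^ 2) x1
             * (\<nu> n (x0 / r ^ 2) x1 / \<nu> n x0 x1)
           - \<nu> n (r ^ 2 * x0) x1 / \<nu> n x0 x1 ) * Pbar q r \<nu> n x x0 x1 )"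
proof -
  obtain m where nm: "n = Suc m" using n by (cases n) auto
  have q0: "q \<noteq> 0" using q by auto
  have r0: "r \<noteq> 0" using r q0 by auto
  have s0: "r^2 \<noteq> 0" using r0 by simp
  have qs: "q = (r^2)^2" using r by (simp add: power_mult[symmetric])
  have qn: "\<And>i. q^Suc i \<noteq> 1" using qpow_ne1 q by blast
  have qinj: "\<And>i j. i \<noteq> j \<Longrightarrow> q^i \<noteq> q^j" using qpow_inj q by blast
  define a where "a = x0^2"
  define b where "b = x1^2"
  define c where "c = x0^2/q"
  have ga: "gen q a" unfolding gen_def a_def using generic gen0 by auto
  have gb: "gen q b" unfolding gen_def b_def using generic gen1 by auto
  have gab: "gen q (a*b)" unfolding gen_def a_def b_def using generic gen0 gen1 by auto
  have gc: "gen q c" unfolding c_def a_def[symmetric] by (rule gen_div[OF q0 ga])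
  have cb: "c*b = (a*b)/q" unfolding c_def a_def by simp
  have gcb: "gen q (c*b)" unfolding cb by (rule gen_div[OF q0 gab])
  have qc: "q*c = a" unfolding c_def a_def using q0 by simp
  have gqc: "gen q (q*c)" unfolding qc by (rule ga)
  have gqcb: "gen q (q*c*b)" unfolding qc by (rule gab)
  have sq1: "(r^2*x0)^2 = q*a" unfolding a_def qs by (simp add: power_mult_distrib)
  have sq2: "(x0/r^2)^2 = c" unfolding c_def qs by (simp add: power_divide)
  have PQ: "AWP q r n x (r^2*x0) x1 = (\<Sum>k\<le>n. cf q (r^2) n k (q*a) b * ph q (r^2) x k)"
    unfolding AWP_cf sq1 b_def ..
  have P: "AWP q r n x x0 x1 = (\<Sum>k\<le>n. cf q (r^2) n k a b * ph q (r^2) x k)"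
    unfolding AWP_cf a_def b_def ..
  have PC: "AWP q r n x (x0/r^2) x1 = (\<Sum>k\<le>n. cf q (r^2) n k c b * ph q (r^2) x k)"
    unfolding AWP_cf sq2 b_def ..
  have P1: "AWP q r (n+1) x x0 x1 = (\<Sum>k\<le>Suc n. cf q (r^2) (Suc n) k (q*c) b * ph q (r^2) x k)"
    unfolding AWP_cf qc a_def b_def by simp
  have Pm: "AWP q r (n-1) x x0 x1 = (\<Sum>k\<le>m. cf q (r^2) m k a b * ph q (r^2) x k)"
    unfolding AWP_cf nm a_def b_def by simp
  have a0: "a \<noteq> 0" "b \<noteq> 0" using ga gb unfolding gen_def by auto
  have hL: "lambdaAW q r (Suc m) x0 x1 * (r^2 * (a*b - q*q^m*q^m) * (a*b - q*q*q^m*q^m)) = a * (1 - q*q^m)^2 * (b - q*q^m)^2"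
  proof -
    have e1: "q^(2*Suc m - 1) = q*q^m*q^m" by (simp add: power_add[symmetric] mult_2)
    have e2: "q^(2*Suc m) = q*q*q^m*q^m" by (simp add: power_add[symmetric] mult_2)
    have "lambdaAW q r (Suc m) x0 x1 = (1/r^2) * (1 - q*q^m)^2 * (1 - q*q^m/b)^2 / (a * (1 - q*q^m*q^m/(a*b)) * (1 - q*q*q^m*q^m/(a*b)))"
      unfolding lambdaAW_def e1 e2 a_def b_def by simp
    then show ?thesis using lamL[OF a0 s0 gen_sub4[OF gab, of m m] gen_sub5[OF gab, of m m]]
      by (simp add: ac_simps)
  qed
  have I: "AWP q r n x (r^2*x0) x1 = AWP q r n x x0 x1 + lambdaAW q r n x0 x1 * AWP q r (n-1) x x0 x1"
    unfolding PQ P Pm unfolding nm by (rule I_sum[OF q0 s0 qn ga gb gab hL])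
  define G where "G = gammaAW q n (x0 / r ^ 2) x1 / lambdaAW q r n (x0 / r ^ 2) x1"
  have Gh: "G * (c * (c*b - q^n*q^n) * (c*b - q*q^n*q^n)) = r^2 * (c*b - q^n)^2 * (c - q^n)^2"
  proof -
    have c0: "c \<noteq> 0" using gc unfolding gen_def by auto
    have T2: "q^(2*n) = q^n*q^n" by (simp add: power_add[symmetric] mult_2)
    have T2p: "q^(2*n+1) = q*q^n*q^n" by (simp add: power_add[symmetric] mult_2)
    have "G = ((1 - q^n)^2 * (1 - q^n/(c*b))^2 * (1 - q^n/c)^2 * (1 - q^n/b)^2) / ((1 - q^(2*n-1)/(c*b)) * (1 - q^(2*n)/(c*b))^2 * (1 - q^(2*n+1)/(c*b)))
      / ((1/r^2) * (1 - q^n)^2 * (1 - q^n/b)^2 / (c * (1 - q^(2*n-1)/(c*b)) * (1 - q^(2*n)/(c*b))))"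
      unfolding G_def gammaAW_def lambdaAW_def sq2 b_def ..
    moreover have "1 - q^n \<noteq> 0" using qn[of m] nm by simp
    moreover have "b - q^n \<noteq> 0" "c*b - q^(2*n-1) \<noteq> 0" "c*b - q^n*q^n \<noteq> 0" "c*b - q*q^n*q^n \<noteq> 0"
      using gen_sub[OF gb] gen_sub[OF gcb] gen_sub2[OF gcb] gen_sub4[OF gcb] by auto
    ultimately show ?thesis using gamL[OF c0 a0(2) s0 _ _ _ _ _ T2 T2p] by simp
  qed
  have II: "((r^2*x + x0^2)*(r^2 + x*x0^2))/(r^2*x) * AWP q r n x (x0/r^2) x1
      = x0^2 * AWP q r (n+1) x x0 x1 + x0^2 * G * AWP q r n x x0 x1"
    using II_sum[OF q0 s0 qs gen_x qn qinj gc gb gcb gqc gqcb Gh] unfolding PC P1 P qc a_def .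
  have a1: "1 - x0^2 \<noteq> 0" using generic[of 0] by auto
  have e: "1/r^2*x0 = x0/r^2" by simp
  have "A2 r (Pbar q r \<nu> n) x x0 x1 = \<i> * (1 / r) * (- 1 / (1 - x0 ^ 2) * (\<nu> n (r^2 * x0) x1 * AWP q r n x (r^2 * x0) x1)
     + ((r ^ 2 * x + x0 ^ 2) * (r ^ 2 + x * x0 ^ 2)) / (r ^ 2 * x * (1 - x0 ^ 2)) * (\<nu> n (x0/r^2) x1 * AWP q r n x (x0/r^2) x1))"
    unfolding A2_def G0_x0_def eth0_def Pbar_def e ..
  also have "\<dots> = \<i> * (1/r) / (1 - x0^2) *
      (- \<nu> n (r^2*x0) x1 * AWP q r n x (r^2*x0) x1
       + \<nu> n (x0/r^2) x1 * (((r^2*x + x0^2)*(r^2 + x*x0^2))/(r^2*x) * AWP q r n x (x0/r^2) x1))"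
    by (rule rearr1) (use a1 r0 gen_x in simp_all)
  also have "\<dots> = \<i> * (1/r) / (1 - x0^2) *
      (- \<nu> n (r^2*x0) x1 * (AWP q r n x x0 x1 + lambdaAW q r n x0 x1 * AWP q r (n-1) x x0 x1)
       + \<nu> n (x0/r^2) x1 * (x0^2 * AWP q r (n+1) x x0 x1 + x0^2 * G * AWP q r n x x0 x1))"
    unfolding I II ..
  finally have eq: "A2 r (Pbar q r \<nu> n) x x0 x1 = \<i> * (1/r) / (1 - x0^2) *
      (- \<nu> n (r^2*x0) x1 * (AWP q r n x x0 x1 + lambdaAW q r n x0 x1 * AWP q r (n-1) x x0 x1)
       + \<nu> n (x0/r^2) x1 * (x0^2 * AWP q r (n+1) x x0 x1 + x0^2 * G * AWP q r n x x0 x1))" .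
  show ?thesis unfolding eq unfolding Pbar_def G_def by (rule rearr2) (use nu r0 a1 in auto)
qed

lemma AWP_sym: "AWP q r n x x0 x1 = AWP q r n x x1 x0"
  unfolding AWP_def by (simp add: ac_simps)

lemma gam_sym: "gammaAW q n u v = gammaAW q n v u"
  unfolding gammaAW_def by (simp add: ac_simps)

lemma Pbar_sym: "Pbar q r (\<lambda>m u v. \<nu> m v u) k x x1 x0 = Pbar q r \<nu> k x x0 x1"
  unfolding Pbar_def using AWP_sym by simp

lemma A4_sym: "A4 r (Pbar q r \<nu> n) x x0 x1 = A2 r (Pbar q r (\<lambda>m u v. \<nu> m v u) n) x x1 x0"
  unfolding A4_def A2_def G0_x1_def G0_x0_def eth0_def eth1_def Pbar_def
  by (simp add: AWP_sym[of q r n x x0])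

theorem mainTheorem4:
  fixes q r :: complex and \<nu> :: "nat \<Rightarrow> complex \<Rightarrow> complex \<Rightarrow> complex"
    and n :: nat and x x0 x1 :: complex
  assumes q: "0 < norm q" "norm q < 1"
    and r: "r ^ 4 = q"
    and nu: "\<And>m a b. \<nu> m a b \<noteq> 0"
    and n: "n \<ge> 1"
    and gen_x: "x \<noteq> 0" and gen0: "x0 \<noteq> 0" and gen1: "x1 \<noteq> 0"
    and generic: "\<And>m::int. x0 ^ 2 \<noteq> q powi m \<and> x1 ^ 2 \<noteq> q powi m
                              \<and> x0 ^ 2 * x1 ^ 2 \<noteq> q powi m"
  shows
    "A2 r (Pbar q r \<nu> n) x x0 x1 =
       \<i> * (1 / r) / (1 - x0 ^ 2) *
       ( x0 ^ 2 * \<nu> n (x0 / r ^ 2) x1 / \<nu> (n + 1) x0 x1 * Pbar q r \<nu> (n + 1) x x0 x1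
       - \<nu> n (r ^ 2 * x0) x1 / \<nu> (n - 1) x0 x1 * lambdaAW q r n x0 x1 * Pbar q r \<nu> (n - 1) x x0 x1
       + ( x0 ^ 2 * gammaAW q n (x0 / r ^ 2) x1 / lambdaAW q r n (x0 / r ^ 2) x1
             * (\<nu> n (x0 / r ^ 2) x1 / \<nu> n x0 x1)
           - \<nu> n (r ^ 2 * x0) x1 / \<nu> n x0 x1 ) * Pbar q r \<nu> n x x0 x1 )
   \<and> A4 r (Pbar q r \<nu> n) x x0 x1 =
       \<i> * (1 / r) / (1 - x1 ^ 2) *
       ( x1 ^ 2 * \<nu> n x0 (x1 / r ^ 2) / \<nu> (n + 1) x0 x1 * Pbar q r \<nu> (n + 1) x x0 x1
       - \<nu> n x0 (r ^ 2 * x1) / \<nu> (n - 1) x0 x1 * lambdaAW q r n x1 x0 * Pbar q r \<nu> (n - 1) x x0 x1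
       + ( x1 ^ 2 * gammaAW q n x0 (x1 / r ^ 2) / lambdaAW q r n (x1 / r ^ 2) x0
             * (\<nu> n x0 (x1 / r ^ 2) / \<nu> n x0 x1)
           - \<nu> n x0 (r ^ 2 * x1) / \<nu> n x0 x1 ) * Pbar q r \<nu> n x x0 x1 )"
proof -
  have g': "\<And>m::int. x1 ^ 2 \<noteq> q powi m \<and> x0 ^ 2 \<noteq> q powi m \<and> x1 ^ 2 * x0 ^ 2 \<noteq> q powi m"
    using generic by (simp add: mult.commute)
  have nu': "\<And>m a b. (\<lambda>m u v. \<nu> m v u) m a b \<noteq> 0" using nu by simp
  note X = partA2[OF q r nu' n gen_x gen1 gen0 g']
  show ?thesis
    apply (rule conjI)
     apply (rule partA2[OF q r nu n gen_x gen0 gen1 generic])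
    apply (unfold A4_sym X Pbar_sym[of q r \<nu>] gam_sym[of q n "x1 / r^2" x0])
    apply (rule refl)
    done
qed

end
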